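(* Let $(x,y)$ be a random pair satisfying the linear-model assumption and the irrepresentable condition $\mu_{S^*}<1$ described in the context. Then for every $S\subseteq S^*$, $$\max_{j\notin S^*}|Z_j^S|\le \mu_{S^*}\max_{i\in S^*\setminus S}|Z_i^S|,$$ with the convention $\max\emptyset=0$.
   Context: $(x,y)$ is a random pair with $x\in\mathbb{R}^d$, $y\in\mathbb{R}$, both square integrable. Linear-model assumption: $\mathbb{E}[x]=0$, $y=\langle\beta^*,x\rangle+\epsilon$ for some $\beta^*\in\mathbb{R}^d$, with $\mathbb{E}[\epsilon\mid x]=0$. Let $S^*=\{i:\beta^*_i\neq 0\}$, $s^*=|S^*|$, $\Sigma$ the covariance matrix of $x$, and for $F\subseteq[d]$ let $\Sigma_F$ be the submatrix with rows and columns in $F$, $x_F$ the subvector of $x$ indexed by $F$, and $\mathrm{Cov}(x_F,x_j)\in\mathbb{R}^{|F|}$ the vector of covariances $\mathrm{Cov}(x_i,x_j)$, $i\in F$. Define $\mu_F=\max_{j\in[d]\setminus F}\|\Sigma_F^{-1}\mathrm{Cov}(x_F,x_j)\|_1$ (when $\Sigma_F$ is invertible). Irrepresentable condition: for all $F\subseteq[d]$ with $|F|=s^*$, $\Sigma_F$ is invertible and $0\le\mu_F<1$. Let $\mathcal{R}(\beta)=\mathbb{E}[(y-\langle x,\beta\rangle)^2]$, and for $S\subseteq S^*$ let $\beta^S\in\arg\min_{\mathrm{supp}(\beta)\subseteq S}\mathcal{R}(\beta)$. Define $Z_i^S=\mathbb{E}[x_i(y-\langle x,\beta^S\rangle)]$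 for $i\in[d]$. *)

theory Defs
  imports "HOL-Probability.Probability" "Jordan_Normal_Form.Matrix"
begin

text \<open>Random vector x in R^d is modelled by the family X i (i < d) of real random
  variables on a probability space M; y is Y. Vectors beta in R^d are functions
  nat => real (only the coordinates i < d matter).\<close>

definition cov :: "'a measure \<Rightarrow> ('a \<Rightarrow> real) \<Rightarrow> ('a \<Rightarrow> real) \<Rightarrow> real" where
  "cov M U V = (\<integral>\<omega>. (U \<omega> - (\<integral>t. U t \<partial>M)) * (V \<omega> - (\<integral>t. V t \<partial>M)) \<partial>M)"

definition idx :: "nat set \<Rightarrow> nat \<Rightarrow> nat" where
  "idx F a = sorted_list_of_set F ! a"

definition Sigma_sub :: "'a measure \<Rightarrow> (nat \<Rightarrow> 'a \<Rightarrow> real) \<Rightarrow> nat set \<Rightarrow> real mat" where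
  "Sigma_sub M X F = mat (card F) (card F) (\<lambda>(a,b). cov M (X (idx F a)) (X (idx F b)))"

definition cov_vec :: "'a measure \<Rightarrow> (nat \<Rightarrow> 'a \<Rightarrow> real) \<Rightarrow> nat set \<Rightarrow> nat \<Rightarrow> real vec" where
  "cov_vec M X F j = vec (card F) (\<lambda>a. cov M (X (idx F a)) (X j))"

definition l1norm :: "real vec \<Rightarrow> real" where
  "l1norm v = (\<Sum>a<dim_vec v. \<bar>v $ a\<bar>)"

definition mat_inv :: "real mat \<Rightarrow> real mat" where
  "mat_inv A = (SOME B. B \<in> carrier_mat (dim_row A) (dim_row A) \<and> inverts_mat A B \<and> inverts_mat B A)"

text \<open>mu_F = max over j in [d] - F of || Sigma_F^{-1} Cov(x_F,x_j) ||_1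
  (max of the empty set taken to be 0; all values are >= 0).\<close>
definition mu :: "'a measure \<Rightarrow> (nat \<Rightarrow> 'a \<Rightarrow> real) \<Rightarrow> nat \<Rightarrow> nat set \<Rightarrow> real" where
  "mu M X d F = Max (insert 0
     {l1norm (mat_inv (Sigma_sub M X F) *\<^sub>v cov_vec M X F j) | j. j < d \<and> j \<notin> F})"

definition irrepresentable :: "'a measure \<Rightarrow> (nat \<Rightarrow> 'a \<Rightarrow> real) \<Rightarrow> nat \<Rightarrow> nat \<Rightarrow> bool" where
  "irrepresentable M X d s \<longleftrightarrow>
     (\<forall>F. F \<subseteq> {..<d} \<and> card F = s \<longrightarrow>
        invertible_mat (Sigma_sub M X F) \<and> 0 \<le> mu M X d F \<and> mu M X d F < 1)"

definition inner_d :: "nat \<Rightarrow> (nat \<Rightarrow> real) \<Rightarrow> (nat \<Rightarrow> 'a \<Rightarrow> real) \<Rightarrow> 'a \<Rightarrow> real" where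
  "inner_d d \<beta> X \<omega> = (\<Sum>i<d. \<beta> i * X i \<omega>)"

definition risk :: "'a measure \<Rightarrow> nat \<Rightarrow> (nat \<Rightarrow> 'a \<Rightarrow> real) \<Rightarrow> ('a \<Rightarrow> real) \<Rightarrow> (nat \<Rightarrow> real) \<Rightarrow> real" where
  "risk M d X Y \<beta> = (\<integral>\<omega>. (Y \<omega> - inner_d d \<beta> X \<omega>)\<^sup>2 \<partial>M)"

definition supp_in :: "(nat \<Rightarrow> real) \<Rightarrow> nat set \<Rightarrow> bool" where
  "supp_in \<beta> S \<longleftrightarrow> (\<forall>i. i \<notin> S \<longrightarrow> \<beta> i = 0)"

definition is_restricted_min :: "'a measure \<Rightarrow> nat \<Rightarrow> (nat \<Rightarrow> 'a \<Rightarrow> real) \<Rightarrow> ('a \<Rightarrow> real) \<Rightarrow> nat set \<Rightarrow> (nat \<Rightarrow> real) \<Rightarrow> bool" where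
  "is_restricted_min M d X Y S \<beta> \<longleftrightarrow>
     supp_in \<beta> S \<and> (\<forall>\<beta>'. supp_in \<beta>' S \<longrightarrow> risk M d X Y \<beta> \<le> risk M d X Y \<beta>')"

definition Zres :: "'a measure \<Rightarrow> nat \<Rightarrow> (nat \<Rightarrow> 'a \<Rightarrow> real) \<Rightarrow> ('a \<Rightarrow> real) \<Rightarrow> (nat \<Rightarrow> real) \<Rightarrow> nat \<Rightarrow> real" where
  "Zres M d X Y \<beta> i = (\<integral>\<omega>. X i \<omega> * (Y \<omega> - inner_d d \<beta> X \<omega>) \<partial>M)"

definition sigma_x :: "'a measure \<Rightarrow> nat \<Rightarrow> (nat \<Rightarrow> 'a \<Rightarrow> real) \<Rightarrow> 'a measure" where
  "sigma_x M d X = vimage_algebra (space M) (\<lambda>\<omega>. restrict (\<lambda>i. X i \<omega>) {..<d}) (PiM {..<d} (\<lambda>_. borel))"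

end

theory Submission
  imports Defs
begin

lemma L2_prod_int:
  fixes f g :: "'a \<Rightarrow> real"
  assumes "f \<in> borel_measurable M" "g \<in> borel_measurable M"
    "integrable M (\<lambda>x. (f x)\<^sup>2)" "integrable M (\<lambda>x. (g x)\<^sup>2)"
  shows "integrable M (\<lambda>x. f x * g x)"
proof (rule Bochner_Integration.integrable_bound[where f="\<lambda>x. (f x)\<^sup>2 + (g x)\<^sup>2"])
  show "integrable M (\<lambda>x. (f x)\<^sup>2 + (g x)\<^sup>2)" using assms by auto
  show "(\<lambda>x. f x * g x) \<in> borel_measurable M" using assms by auto
  have "\<And>a b::real. \<bar>a*b\<bar> \<le> a\<^sup>2 + b\<^sup>2"
  proof -
    fix a b :: real
    have "0 \<le> (\<bar>a\<bar> - \<bar>b\<bar>)\<^sup>2" by simp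
    then have "2 * (\<bar>a\<bar> * \<bar>b\<bar>) \<le> a\<^sup>2 + b\<^sup>2" by (simp add: power2_eq_square algebra_simps)
    moreover have "0 \<le> \<bar>a\<bar> * \<bar>b\<bar>" by simp
    ultimately show "\<bar>a*b\<bar> \<le> a\<^sup>2 + b\<^sup>2" unfolding abs_mult by linarith
  qed
  then show "AE x in M. norm (f x * g x) \<le> norm ((f x)\<^sup>2 + (g x)\<^sup>2)" by auto
qed

lemma L2_add:
  fixes f g :: "'a \<Rightarrow> real"
  assumes "f \<in> borel_measurable M" "g \<in> borel_measurable M"
    "integrable M (\<lambda>x. (f x)\<^sup>2)" "integrable M (\<lambda>x. (g x)\<^sup>2)"
  shows "integrable M (\<lambda>x. (f x + g x)\<^sup>2)"
proof -
  have "(\<lambda>x. (f x + g x)\<^sup>2) = (\<lambda>x. (f x)\<^sup>2 + 2 * (f x * g x) + (g x)\<^sup>2)"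
    by (auto simp: power2_eq_square algebra_simps)
  moreover have "integrable M (\<lambda>x. f x * g x)" using L2_prod_int assms by blast
  ultimately show ?thesis using assms by auto
qed

lemma L2_sum:
  fixes f :: "'b \<Rightarrow> 'a \<Rightarrow> real"
  assumes "finite I" "\<And>i. i \<in> I \<Longrightarrow> f i \<in> borel_measurable M"
    "\<And>i. i \<in> I \<Longrightarrow> integrable M (\<lambda>x. (f i x)\<^sup>2)"
  shows "integrable M (\<lambda>x. (\<Sum>i\<in>I. f i x)\<^sup>2)"
  using assms
proof (induction I rule: finite_induct)
  case empty then show ?case by simp
next
  case (insert a I)
  have "(\<lambda>x. (\<Sum>i\<in>I. f i x)) \<in> borel_measurable M" using insert by auto
  then show ?case using insert L2_add[of "f a" M "\<lambda>x. \<Sum>i\<in>I. f i x"] by auto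
qed

lemma inner_meas:
  assumes "\<And>i. i < d \<Longrightarrow> X i \<in> borel_measurable M"
  shows "inner_d d \<beta> X \<in> borel_measurable M"
  unfolding inner_d_def using assms by (intro borel_measurable_sum) auto

lemma inner_L2:
  assumes "\<And>i. i < d \<Longrightarrow> X i \<in> borel_measurable M"
    "\<And>i. i < d \<Longrightarrow> integrable M (\<lambda>\<omega>. (X i \<omega>)\<^sup>2)"
  shows "integrable M (\<lambda>\<omega>. (inner_d d \<beta> X \<omega>)\<^sup>2)"
  unfolding inner_d_def
proof (rule L2_sum)
  fix i assume "i \<in> {..<d}"
  then show "(\<lambda>\<omega>. \<beta> i * X i \<omega>) \<in> borel_measurable M"
    "integrable M (\<lambda>\<omega>. (\<beta> i * X i \<omega>)\<^sup>2)" using assms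
    by (auto simp: power_mult_distrib)
qed simp

lemma resid_L2:
  assumes "\<And>i. i < d \<Longrightarrow> X i \<in> borel_measurable M"
    "\<And>i. i < d \<Longrightarrow> integrable M (\<lambda>\<omega>. (X i \<omega>)\<^sup>2)"
    "Y \<in> borel_measurable M" "integrable M (\<lambda>\<omega>. (Y \<omega>)\<^sup>2)"
  shows "integrable M (\<lambda>\<omega>. (Y \<omega> - inner_d d \<beta> X \<omega>)\<^sup>2)"
    "(\<lambda>\<omega>. Y \<omega> - inner_d d \<beta> X \<omega>) \<in> borel_measurable M"
proof -
  have m: "(\<lambda>\<omega>. - inner_d d \<beta> X \<omega>) \<in> borel_measurable M"
    using inner_meas[OF assms(1)] by auto
  have "integrable M (\<lambda>\<omega>. (- inner_d d \<beta> X \<omega>)\<^sup>2)"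
    using inner_L2[OF assms(1,2)] by simp
  from L2_add[OF assms(3) m assms(4) this]
  show "integrable M (\<lambda>\<omega>. (Y \<omega> - inner_d d \<beta> X \<omega>)\<^sup>2)" by simp
  show "(\<lambda>\<omega>. Y \<omega> - inner_d d \<beta> X \<omega>) \<in> borel_measurable M"
    using inner_meas[OF assms(1)] assms(3) by auto
qed

lemma ZE:
  assumes X_rv: "\<And>i. i < d \<Longrightarrow> X i \<in> borel_measurable M"
    and X_sq: "\<And>i. i < d \<Longrightarrow> integrable M (\<lambda>\<omega>. (X i \<omega>)\<^sup>2)"
    and Y_rv: "Y \<in> borel_measurable M" and Y_sq: "integrable M (\<lambda>\<omega>. (Y \<omega>)\<^sup>2)"
    and j: "j < d"
  shows "Zres M d X Y \<beta> j = (\<integral>\<omega>. X j \<omega> * Y \<omega> \<partial>M)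
            - (\<Sum>i<d. \<beta> i * (\<integral>\<omega>. X j \<omega> * X i \<omega> \<partial>M))"
proof -
  have iXY: "integrable M (\<lambda>\<omega>. X j \<omega> * Y \<omega>)"
    using L2_prod_int X_rv X_sq Y_rv Y_sq j by blast
  have iXX: "\<And>i. i < d \<Longrightarrow> integrable M (\<lambda>\<omega>. X j \<omega> * X i \<omega>)"
    using L2_prod_int X_rv X_sq j by blast
  have iS: "integrable M (\<lambda>\<omega>. \<Sum>i<d. \<beta> i * (X j \<omega> * X i \<omega>))"
    using iXX by (intro Bochner_Integration.integrable_sum Bochner_Integration.integrable_mult_right) auto
  have "Zres M d X Y \<beta> j = (\<integral>\<omega>. X j \<omega> * Y \<omega> - (\<Sum>i<d. \<beta> i * (X j \<omega> * X i \<omega>)) \<partial>M)"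
    unfolding Zres_def inner_d_def
    by (rule Bochner_Integration.integral_cong) (auto simp: right_diff_distrib sum_distrib_left algebra_simps)
  also have "\<dots> = (\<integral>\<omega>. X j \<omega> * Y \<omega> \<partial>M) - (\<integral>\<omega>. (\<Sum>i<d. \<beta> i * (X j \<omega> * X i \<omega>)) \<partial>M)"
    using iXY iS by (rule Bochner_Integration.integral_diff)
  also have "(\<integral>\<omega>. (\<Sum>i<d. \<beta> i * (X j \<omega> * X i \<omega>)) \<partial>M) = (\<Sum>i<d. \<beta> i * (\<integral>\<omega>. X j \<omega> * X i \<omega> \<partial>M))"
    using iXX by (subst Bochner_Integration.integral_sum) auto
  finally show ?thesis .
qed

lemma FOC:
  assumes X_rv: "\<And>i. i < d \<Longrightarrow> X i \<in> borel_measurable M"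
    and X_sq: "\<And>i. i < d \<Longrightarrow> integrable M (\<lambda>\<omega>. (X i \<omega>)\<^sup>2)"
    and Y_rv: "Y \<in> borel_measurable M" and Y_sq: "integrable M (\<lambda>\<omega>. (Y \<omega>)\<^sup>2)"
    and bS: "is_restricted_min M d X Y S \<beta>S" and i: "i \<in> S" "i < d"
  shows "Zres M d X Y \<beta>S i = 0"
proof -
  define R where "R = (\<lambda>\<omega>. Y \<omega> - inner_d d \<beta>S X \<omega>)"
  have R2: "integrable M (\<lambda>\<omega>. (R \<omega>)\<^sup>2)" and Rm: "R \<in> borel_measurable M"
    unfolding R_def using resid_L2[OF X_rv X_sq Y_rv Y_sq] by auto
  have iXR: "integrable M (\<lambda>\<omega>. X i \<omega> * R \<omega>)"
    using L2_prod_int[OF X_rv[OF i(2)] Rm X_sq[OF i(2)] R2] .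
  have iX2: "integrable M (\<lambda>\<omega>. (X i \<omega>)\<^sup>2)" using X_sq i by blast
  define Z where "Z = Zres M d X Y \<beta>S i"
  have Zdef: "Z = (\<integral>\<omega>. X i \<omega> * R \<omega> \<partial>M)" unfolding Z_def Zres_def R_def ..
  define a where "a = (\<integral>\<omega>. (X i \<omega>)\<^sup>2 \<partial>M)"
  have a0: "0 \<le> a" unfolding a_def by (rule integral_nonneg_AE) auto
  have key: "0 \<le> t\<^sup>2 * a - 2 * t * Z" for t :: real
  proof -
    define \<beta>' where "\<beta>' = (\<lambda>k. \<beta>S k + (if k = i then t else 0))"
    have supp: "supp_in \<beta>' S" using bS i unfolding \<beta>'_def supp_in_def is_restricted_min_def by auto
    have inn: "inner_d d \<beta>' X \<omega> = inner_d d \<beta>S X \<omega> + t * X i \<omega>" for \<omega>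
    proof -
      have "inner_d d \<beta>' X \<omega> = inner_d d \<beta>S X \<omega> + (\<Sum>k<d. (if k = i then t * X k \<omega> else 0))"
      proof -
        have "(\<Sum>k<d. \<beta>' k * X k \<omega>) = (\<Sum>k<d. \<beta>S k * X k \<omega> + (if k = i then t * X k \<omega> else 0))"
          unfolding \<beta>'_def by (rule sum.cong) (auto simp: distrib_right)
        then show ?thesis unfolding inner_d_def by (simp add: sum.distrib)
      qed
      also have "(\<Sum>k<d. (if k = i then t * X k \<omega> else 0)) = t * X i \<omega>"
        using i by (simp add: sum.delta)
      finally show ?thesis .
    qed
    have "risk M d X Y \<beta>' = (\<integral>\<omega>. (R \<omega>)\<^sup>2 - 2 * t * (X i \<omega> * R \<omega>) + t\<^sup>2 * (X i \<omega>)\<^sup>2 \<partial>M)"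
      unfolding risk_def inn R_def
      by (rule Bochner_Integration.integral_cong) (auto simp: power2_eq_square algebra_simps)
    also have "\<dots> = (\<integral>\<omega>. (R \<omega>)\<^sup>2 - 2 * t * (X i \<omega> * R \<omega>) \<partial>M) + (\<integral>\<omega>. t\<^sup>2 * (X i \<omega>)\<^sup>2 \<partial>M)"
      using R2 iXR iX2 by (intro Bochner_Integration.integral_add) auto
    also have "(\<integral>\<omega>. (R \<omega>)\<^sup>2 - 2 * t * (X i \<omega> * R \<omega>) \<partial>M) = (\<integral>\<omega>. (R \<omega>)\<^sup>2 \<partial>M) - (\<integral>\<omega>. 2 * t * (X i \<omega> * R \<omega>) \<partial>M)"
      using R2 iXR by (intro Bochner_Integration.integral_diff) auto
    also have "(\<integral>\<omega>. 2 * t * (X i \<omega> * R \<omega>) \<partial>M) = 2 * t * Z"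
      unfolding Zdef by simp
    also have "(\<integral>\<omega>. t\<^sup>2 * (X i \<omega>)\<^sup>2 \<partial>M) = t\<^sup>2 * a"
      unfolding a_def by simp
    finally have "risk M d X Y \<beta>' = risk M d X Y \<beta>S - 2 * t * Z + t\<^sup>2 * a"
      unfolding risk_def R_def by simp
    moreover have "risk M d X Y \<beta>S \<le> risk M d X Y \<beta>'"
      using bS supp unfolding is_restricted_min_def by blast
    ultimately show ?thesis by linarith
  qed
  define t where "t = Z / (a + 1)"
  have ta: "t * (a + 1) = Z" unfolding t_def using a0 by simp
  have "0 \<le> t\<^sup>2 * a - 2 * t * Z" by (rule key)
  moreover have "t\<^sup>2 * a \<le> t\<^sup>2 * (a + 1)" by (simp add: mult_left_mono)
  moreover have "t\<^sup>2 * (a + 1) = t * Z" using ta by (simp add: power2_eq_square algebra_simps)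
  ultimately have "0 \<le> - (t * Z)" by linarith
  moreover have "t * Z = Z\<^sup>2 / (a + 1)" unfolding t_def by (simp add: power2_eq_square)
  ultimately have "Z\<^sup>2 / (a + 1) \<le> 0" by linarith
  then have "Z\<^sup>2 \<le> 0" using a0 by (simp add: divide_le_0_iff)
  then show ?thesis unfolding Z_def by simp
qed

lemma noise_orth:
  assumes P: "prob_space M" and X_rv: "\<And>i. i < d \<Longrightarrow> X i \<in> borel_measurable M"
    and em: "e \<in> borel_measurable M"
    and ae: "AE \<omega> in M. real_cond_exp M (sigma_x M d X) e \<omega> = 0"
    and int: "integrable M (\<lambda>\<omega>. X j \<omega> * e \<omega>)" and j: "j < d"
  shows "(\<integral>\<omega>. X j \<omega> * e \<omega> \<partial>M) = 0"
proof -
  interpret prob_space M by fact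
  define f where "f = (\<lambda>\<omega>. restrict (\<lambda>i. X i \<omega>) {..<d})"
  have fm: "f \<in> measurable M (PiM {..<d} (\<lambda>_. borel))"
    unfolding f_def using X_rv by (intro measurable_restrict) auto
  have fs: "f \<in> space M \<rightarrow> space (PiM {..<d} (\<lambda>_. (borel :: real measure)))"
    using measurable_space[OF fm] by blast
  have sx: "sigma_x M d X = vimage_algebra (space M) f (PiM {..<d} (\<lambda>_. borel))"
    unfolding sigma_x_def f_def ..
  have sub: "subalgebra M (sigma_x M d X)"
    unfolding subalgebra_def sx
    using sets_vimage_algebra2[OF fs] measurable_sets[OF fm] by auto
  interpret finite_measure_subalgebra M "sigma_x M d X"
    by unfold_locales (rule sub)
  have Xj: "X j \<in> borel_measurable (sigma_x M d X)"
  proof -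
    have "X j = (\<lambda>x. x j) \<circ> f" using j by (auto simp: f_def)
    moreover have "f \<in> measurable (sigma_x M d X) (PiM {..<d} (\<lambda>_. borel))"
      unfolding sx by (rule measurable_vimage_algebra1[OF fs])
    moreover have "(\<lambda>x. x j) \<in> measurable (PiM {..<d} (\<lambda>_. borel)) (borel :: real measure)"
      using j by (intro measurable_component_singleton) auto
    ultimately show ?thesis by (metis measurable_comp)
  qed
  have "(\<integral>\<omega>. X j \<omega> * e \<omega> \<partial>M) = (\<integral>\<omega>. X j \<omega> * real_cond_exp M (sigma_x M d X) e \<omega> \<partial>M)"
    using real_cond_exp_intg(2)[OF int Xj em] by simp
  also have "\<dots> = (\<integral>\<omega>. 0 \<partial>M)"
    by (rule integral_cong_AE) (use ae X_rv j in auto)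
  finally show ?thesis by simp
qed

theorem lemma1:
  fixes M :: "'a measure" and d :: nat and X :: "nat \<Rightarrow> 'a \<Rightarrow> real"
    and Y :: "'a \<Rightarrow> real" and \<beta>star :: "nat \<Rightarrow> real"
    and S :: "nat set" and \<beta>S :: "nat \<Rightarrow> real"
  assumes "prob_space M"
    and X_rv: "\<And>i. i < d \<Longrightarrow> X i \<in> borel_measurable M"
    and X_sq: "\<And>i. i < d \<Longrightarrow> integrable M (\<lambda>\<omega>. (X i \<omega>)\<^sup>2)"
    and Y_rv: "Y \<in> borel_measurable M"
    and Y_sq: "integrable M (\<lambda>\<omega>. (Y \<omega>)\<^sup>2)"
    and X_mean: "\<And>i. i < d \<Longrightarrow> (\<integral>\<omega>. X i \<omega> \<partial>M) = 0"
    and noise: "AE \<omega> in M. real_cond_exp M (sigma_x M d X)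
                   (\<lambda>\<omega>'. Y \<omega>' - inner_d d \<beta>star X \<omega>') \<omega> = 0"
    and irr: "irrepresentable M X d (card {i. i < d \<and> \<beta>star i \<noteq> 0})"
    and S_sub: "S \<subseteq> {i. i < d \<and> \<beta>star i \<noteq> 0}"
    and bS: "is_restricted_min M d X Y S \<beta>S"
  shows "Max (insert 0 {\<bar>Zres M d X Y \<beta>S j\<bar> | j. j < d \<and> j \<notin> {i. i < d \<and> \<beta>star i \<noteq> 0}})
         \<le> mu M X d {i. i < d \<and> \<beta>star i \<noteq> 0}
           * Max (insert 0 {\<bar>Zres M d X Y \<beta>S i\<bar> | i. i \<in> {i. i < d \<and> \<beta>star i \<noteq> 0} - S})"
proof -
  define Ss where "Ss = {i. i < d \<and> \<beta>star i \<noteq> 0}"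
  define n where "n = card Ss"
  define e where "e = idx Ss"
  define E where "E = (\<lambda>i j. \<integral>\<omega>. X i \<omega> * X j \<omega> \<partial>M)"
  define Z where "Z = Zres M d X Y \<beta>S"
  define \<delta> where "\<delta> = (\<lambda>i. \<beta>star i - \<beta>S i)"
  have finS: "finite Ss" unfolding Ss_def by auto
  have SsD: "Ss \<subseteq> {..<d}" unfolding Ss_def by auto
  have SSs: "S \<subseteq> Ss" using S_sub unfolding Ss_def .
  have e_eq: "e = (!) (sorted_list_of_set Ss)" by (auto simp: e_def idx_def fun_eq_iff)
  have bij: "bij_betw e {..<n} Ss"
    unfolding e_eq n_def by (rule bij_betw_nth) (use finS in auto)
  have eS: "a < n \<Longrightarrow> e a \<in> Ss" for a using bij by (auto dest: bij_betwE)
  have ed: "a < n \<Longrightarrow> e a < d" for a using eS SsD by auto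
  have Ecomm: "E i j = E j i" for i j unfolding E_def by (simp add: mult.commute)
  have em: "(\<lambda>\<omega>. Y \<omega> - inner_d d \<beta>star X \<omega>) \<in> borel_measurable M"
    and e2: "integrable M (\<lambda>\<omega>. (Y \<omega> - inner_d d \<beta>star X \<omega>)\<^sup>2)"
    using resid_L2[OF X_rv X_sq Y_rv Y_sq] by auto
  have Z0: "Zres M d X Y \<beta>star j = 0" if j: "j < d" for j
    unfolding Zres_def
    by (rule noise_orth[OF assms(1) X_rv em noise L2_prod_int[OF X_rv[OF j] em X_sq[OF j] e2] j])
  have K: "Z j = (\<Sum>b<n. \<delta> (e b) * E j (e b))" if j: "j < d" for j
  proof -
    have "Z j = Z j - Zres M d X Y \<beta>star j" using Z0[OF j] by simp
    also have "\<dots> = (\<Sum>i<d. \<delta> i * E j i)"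
      using ZE[OF X_rv X_sq Y_rv Y_sq j, where \<beta>=\<beta>S] ZE[OF X_rv X_sq Y_rv Y_sq j, where \<beta>=\<beta>star]
      by (simp add: Z_def \<delta>_def E_def left_diff_distrib sum_subtractf)
    also have "\<dots> = (\<Sum>i\<in>Ss. \<delta> i * E j i)"
    proof (rule sum.mono_neutral_right)
      show "\<forall>i\<in>{..<d} - Ss. \<delta> i * E j i = 0"
      proof
        fix i assume i: "i \<in> {..<d} - Ss"
        then have "\<beta>star i = 0" unfolding Ss_def by auto
        moreover have "\<beta>S i = 0" using i SSs bS unfolding is_restricted_min_def supp_in_def by auto
        ultimately show "\<delta> i * E j i = 0" unfolding \<delta>_def by simp
      qed
    qed (use SsD in auto)
    also have "\<dots> = (\<Sum>b<n. \<delta> (e b) * E j (e b))"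
      by (rule sum.reindex_bij_betw[OF bij, symmetric])
    finally show ?thesis .
  qed
  have FOCs: "Z i = 0" if "i \<in> S" for i
    unfolding Z_def using FOC[OF X_rv X_sq Y_rv Y_sq bS that] that SSs SsD by auto
  define M2 where "M2 = Max (insert 0 {\<bar>Z i\<bar> | i. i \<in> Ss - S})"
  have finM2: "finite {\<bar>Z i\<bar> | i. i \<in> Ss - S}" using finS by simp
  have M20: "0 \<le> M2" unfolding M2_def using finM2 by simp
  have zle: "\<bar>Z (e a)\<bar> \<le> M2" if a: "a < n" for a
  proof (cases "e a \<in> S")
    case True then show ?thesis using FOCs M20 by simp
  next
    case False
    then have "\<bar>Z (e a)\<bar> \<in> {\<bar>Z i\<bar> | i. i \<in> Ss - S}" using eS[OF a] by blast
    then show ?thesis unfolding M2_def using finM2 by (simp add: Max_ge_iff)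
  qed
  define Sg where "Sg = Sigma_sub M X Ss"
  have Sgc: "Sg \<in> carrier_mat n n" by (simp add: Sg_def Sigma_sub_def n_def)
  have Sg_ent: "Sg $$ (a,b) = E (e a) (e b)" if "a < n" "b < n" for a b
    using that ed by (simp add: Sg_def Sigma_sub_def cov_def X_mean E_def n_def e_def)
  have irrS: "invertible_mat Sg" "0 \<le> mu M X d Ss"
    using irr SsD unfolding irrepresentable_def Ss_def[symmetric] Sg_def by auto
  define B where "B = mat_inv Sg"
  have Bp: "B \<in> carrier_mat n n \<and> inverts_mat Sg B \<and> inverts_mat B Sg"
  proof -
    obtain B0 where B0: "inverts_mat Sg B0" "inverts_mat B0 Sg"
      using irrS(1) unfolding invertible_mat_def by blast
    have dr: "dim_row Sg = n" "dim_col Sg = n" using Sgc by auto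
    have "dim_col (Sg * B0) = n" using B0(1) dr unfolding inverts_mat_def by simp
    then have c1: "dim_col B0 = n" by simp
    have "dim_col (B0 * Sg) = dim_row B0" using B0(2) unfolding inverts_mat_def by simp
    then have c2: "dim_row B0 = n" using dr by simp
    have "\<exists>B. B \<in> carrier_mat (dim_row Sg) (dim_row Sg) \<and> inverts_mat Sg B \<and> inverts_mat B Sg"
      using B0 c1 c2 dr by (intro exI[of _ B0]) auto
    from someI_ex[OF this] show ?thesis unfolding B_def mat_inv_def using dr by simp
  qed
  have Bc: "B \<in> carrier_mat n n" using Bp by simp
  have SB: "Sg * B = 1\<^sub>m n" using Bp Sgc unfolding inverts_mat_def by auto
  have SgT: "transpose_mat Sg = Sg"
    by (rule eq_matI) (use Sgc Sg_ent Ecomm in auto)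
  have mu_nn: "0 \<le> mu M X d Ss" by (rule irrS(2))
  have main: "\<bar>Z j\<bar> \<le> mu M X d Ss * M2" if j: "j < d" "j \<notin> Ss" for j
  proof -
    define c where "c = cov_vec M X Ss j"
    have cc: "c \<in> carrier_vec n" by (simp add: c_def cov_vec_def n_def)
    have c_ent: "c $ a = E (e a) j" if "a < n" for a
      using that ed j by (simp add: c_def cov_vec_def cov_def X_mean E_def n_def e_def)
    define w where "w = B *\<^sub>v c"
    have wc: "w \<in> carrier_vec n" using Bc cc unfolding w_def by auto
    define dv where "dv = vec n (\<lambda>b. \<delta> (e b))"
    define zv where "zv = vec n (\<lambda>a. Z (e a))"
    have dvc: "dv \<in> carrier_vec n" unfolding dv_def by simp
    have zv_eq: "zv = Sg *\<^sub>v dv"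
    proof (rule eq_vecI)
      show "dim_vec zv = dim_vec (Sg *\<^sub>v dv)" using Sgc by (simp add: zv_def)
      fix a assume "a < dim_vec (Sg *\<^sub>v dv)"
      then have a: "a < n" using Sgc by simp
      have "(Sg *\<^sub>v dv) $ a = (\<Sum>b<n. Sg $$ (a,b) * \<delta> (e b))"
        using a Sgc by (simp add: scalar_prod_def dv_def atLeast0LessThan row_def)
      also have "\<dots> = (\<Sum>b<n. \<delta> (e b) * E (e a) (e b))"
        using a by (intro sum.cong) (auto simp: Sg_ent)
      also have "\<dots> = Z (e a)" using K[OF ed[OF a]] by simp
      finally show "zv $ a = (Sg *\<^sub>v dv) $ a" using a by (simp add: zv_def)
    qed
    have Sw: "Sg *\<^sub>v w = c"
      unfolding w_def using Sgc Bc cc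
      by (simp add: assoc_mult_mat_vec[symmetric] SB)
    have "w \<bullet> zv = (transpose_mat Sg *\<^sub>v w) \<bullet> dv"
      unfolding zv_eq by (rule transpose_vec_mult_scalar[OF Sgc dvc wc, symmetric])
    also have "\<dots> = c \<bullet> dv" using SgT Sw by simp
    also have "\<dots> = (\<Sum>b<n. \<delta> (e b) * E j (e b))"
      unfolding scalar_prod_def atLeast0LessThan dv_def
      by (intro sum.cong) (auto simp: c_ent Ecomm mult.commute)
    also have "\<dots> = Z j" using K[OF j(1)] by simp
    finally have Zw: "Z j = (\<Sum>a<n. w $ a * Z (e a))"
      by (simp add: scalar_prod_def zv_def atLeast0LessThan)
    have "\<bar>Z j\<bar> \<le> (\<Sum>a<n. \<bar>w $ a\<bar> * \<bar>Z (e a)\<bar>)"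
      unfolding Zw by (rule order_trans[OF sum_abs]) (simp add: abs_mult)
    also have "\<dots> \<le> (\<Sum>a<n. \<bar>w $ a\<bar> * M2)"
      by (intro sum_mono mult_left_mono zle) auto
    also have "\<dots> = l1norm w * M2"
      using wc by (simp add: l1norm_def sum_distrib_right)
    also have "\<dots> \<le> mu M X d Ss * M2"
    proof (rule mult_right_mono[OF _ M20])
      have "l1norm w \<in> {l1norm (mat_inv (Sigma_sub M X Ss) *\<^sub>v cov_vec M X Ss j) | j. j < d \<and> j \<notin> Ss}"
        using j unfolding w_def B_def Sg_def c_def by blast
      moreover have "finite {l1norm (mat_inv (Sigma_sub M X Ss) *\<^sub>v cov_vec M X Ss j) | j. j < d \<and> j \<notin> Ss}"
        by simp
      ultimately show "l1norm w \<le> mu M X d Ss" unfolding mu_def by (simp add: Max_ge_iff)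
    qed
    finally show ?thesis .
  qed
  have finL: "finite {\<bar>Z j\<bar> | j. j < d \<and> j \<notin> Ss}" by simp
  have "Max (insert 0 {\<bar>Z j\<bar> | j. j < d \<and> j \<notin> Ss}) \<le> mu M X d Ss * M2"
    using finL main mu_nn M20 by (auto simp: Max_le_iff)
  then show ?thesis unfolding Ss_def[symmetric] Z_def[symmetric] M2_def .
qed

end
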